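(* An automaton $\mathcal{A}=\langle Q,A,\cdot,q_0,F\rangle$ is quasi-zero if and only if its quotient automaton $\mathcal{A}/\!\sim$ (which is the minimal automaton of $L(\mathcal{A})$) is a zero automaton.
   Context: Automata are complete, deterministic, finite, accessible. For a state $q$, $\mathrm{Fut}(q)=\{w: q\cdot w\in F\}$. The Nerode equivalence is $p\sim q$ iff $\mathrm{Fut}(p)=\mathrm{Fut}(q)$; the quotient automaton $\mathcal{A}/\!\sim$ has states the classes $[q]$, initial state $[q_0]$, final states $\{[q]:q\in F\}$ and transitions $[p]\cdot a=[p\cdot a]$. A strongly connected sink component is a nonempty $P\subseteq Q$ such that every state of $P$ is reachable from every other state of $P$ and no state outside $P$ is reachable from $P$; $\mathrm{Sink}(\mathcal{A})$ is the family of these. $\mathcal{A}$ is quasi-zero if either $\bigcup\mathrm{Sink}(\mathcal{A})\subseteq F$ or $\bigcup\mathrm{Sink}(\mathcal{A})\cap F=\emptyset$. A zero automaton is an automaton with a sink state ($q\cdot a=q$ for all $a$) and a synchronising word (a word $w$ with $p\cdot w$ the same for all $p$). *)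

theory Defs
  imports Main
begin

record ('q, 'a) dfa =
  states :: "'q set"
  alph   :: "'a set"
  trans  :: "'q \<Rightarrow> 'a \<Rightarrow> 'q"
  init   :: "'q"
  final  :: "'q set"

definition run :: "('q, 'a, 'z) dfa_scheme \<Rightarrow> 'q \<Rightarrow> 'a list \<Rightarrow> 'q" where
  "run M q w = foldl (trans M) q w"

definition wf_dfa :: "('q, 'a) dfa \<Rightarrow> bool" where
  "wf_dfa M \<longleftrightarrow> finite (states M) \<and> finite (alph M) \<and> init M \<in> states M
     \<and> final M \<subseteq> states M
     \<and> (\<forall>q\<in>states M. \<forall>a\<in>alph M. trans M q a \<in> states M)
     \<and> (\<forall>q\<in>states M. \<exists>w\<in>lists (alph M). run M (init M) w = q)"

definition Fut :: "('q, 'a) dfa \<Rightarrow> 'q \<Rightarrow> 'a list set" where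
  "Fut M q = {w \<in> lists (alph M). run M q w \<in> final M}"

definition nerode :: "('q, 'a) dfa \<Rightarrow> ('q \<times> 'q) set" where
  "nerode M = {(p, q). p \<in> states M \<and> q \<in> states M \<and> Fut M p = Fut M q}"

text \<open>Quotient automaton A/~ : states are Nerode classes, [p].a = [p.a]
  (written as the union of the classes of p.a for p in the class, which is
  the single class [p.a] since ~ is a congruence).\<close>
definition quotient :: "('q, 'a) dfa \<Rightarrow> ('q set, 'a) dfa" where
  "quotient M = \<lparr> states = states M // nerode M,
                  alph = alph M,
                  trans = (\<lambda>C a. nerode M `` ((\<lambda>p. trans M p a) ` C)),
                  init = nerode M `` {init M},
                  final = {nerode M `` {q} | q. q \<in> final M} \<rparr>"

definition Sink :: "('q, 'a) dfa \<Rightarrow> 'q set set" where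
  "Sink M = {P. P \<noteq> {} \<and> P \<subseteq> states M
     \<and> (\<forall>p\<in>P. \<forall>q\<in>P. \<exists>w\<in>lists (alph M). run M p w = q)
     \<and> (\<forall>p\<in>P. \<forall>w\<in>lists (alph M). run M p w \<in> P)}"

definition quasi_zero :: "('q, 'a) dfa \<Rightarrow> bool" where
  "quasi_zero M \<longleftrightarrow> \<Union>(Sink M) \<subseteq> final M \<or> \<Union>(Sink M) \<inter> final M = {}"

definition zero_automaton :: "('q, 'a) dfa \<Rightarrow> bool" where
  "zero_automaton M \<longleftrightarrow>
     (\<exists>z\<in>states M. \<forall>a\<in>alph M. trans M z a = z)
     \<and> (\<exists>w\<in>lists (alph M). \<exists>r. \<forall>p\<in>states M. run M p w = r)"

end

theory Submission
  imports Defs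
begin

lemma run_Nil[simp]: "run M q [] = q" by (simp add: run_def)
lemma run_Cons[simp]: "run M q (a#w) = run M (trans M q a) w" by (simp add: run_def)
lemma run_append: "run M q (u@v) = run M (run M q u) v" by (simp add: run_def)

lemma run_in:
  assumes "wf_dfa M" "q \<in> states M" "w \<in> lists (alph M)"
  shows "run M q w \<in> states M"
  using assms(2,3)
proof (induction w arbitrary: q)
  case Nil then show ?case by simp
next
  case (Cons a w) then show ?case using assms(1) unfolding wf_dfa_def by auto
qed

lemma nerode_equiv: "equiv (states M) (nerode M)"
  by (rule equivI) (auto simp: nerode_def refl_on_def sym_def intro!: transI)

lemma nerode_cong:
  assumes "wf_dfa M" "(p, q) \<in> nerode M" "a \<in> alph M"
  shows "(trans M p a, trans M q a) \<in> nerode M"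
proof -
  have F: "Fut M p = Fut M q" and ps: "p \<in> states M" "q \<in> states M"
    using assms(2) by (auto simp: nerode_def)
  have "Fut M (trans M p a) = Fut M (trans M q a)"
  proof
    show "Fut M (trans M p a) \<subseteq> Fut M (trans M q a)"
    proof
      fix w assume "w \<in> Fut M (trans M p a)"
      then have "a # w \<in> Fut M p" using assms(3) by (auto simp: Fut_def)
      then have "a # w \<in> Fut M q" using F by simp
      then show "w \<in> Fut M (trans M q a)" by (auto simp: Fut_def)
    qed
  next
    show "Fut M (trans M q a) \<subseteq> Fut M (trans M p a)"
    proof
      fix w assume "w \<in> Fut M (trans M q a)"
      then have "a # w \<in> Fut M q" using assms(3) by (auto simp: Fut_def)
      then have "a # w \<in> Fut M p" using F by simp
      then show "w \<in> Fut M (trans M p a)" by (auto simp: Fut_def)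
    qed
  qed
  moreover have "trans M p a \<in> states M" "trans M q a \<in> states M"
    using assms(1,3) ps unfolding wf_dfa_def by auto
  ultimately show ?thesis by (simp add: nerode_def)
qed

lemma nerode_final:
  assumes "(p, q) \<in> nerode M"
  shows "p \<in> final M \<longleftrightarrow> q \<in> final M"
proof -
  have "Fut M p = Fut M q" using assms by (simp add: nerode_def)
  then have "([] \<in> Fut M p) = ([] \<in> Fut M q)" by simp
  then show ?thesis by (simp add: Fut_def)
qed

lemma qtrans:
  assumes "wf_dfa M" "p \<in> states M" "a \<in> alph M"
  shows "trans (quotient M) (nerode M `` {p}) a = nerode M `` {trans M p a}"
proof -
  have E: "equiv (states M) (nerode M)" by (rule nerode_equiv)
  have "nerode M `` ((\<lambda>p. trans M p a) ` (nerode M `` {p})) = nerode M `` {trans M p a}"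
  proof
    show "nerode M `` ((\<lambda>p. trans M p a) ` (nerode M `` {p})) \<subseteq> nerode M `` {trans M p a}"
    proof
      fix x assume "x \<in> nerode M `` ((\<lambda>p. trans M p a) ` (nerode M `` {p}))"
      then obtain q where q: "(p, q) \<in> nerode M" "(trans M q a, x) \<in> nerode M" by auto
      have "(trans M p a, trans M q a) \<in> nerode M" using nerode_cong[OF assms(1) q(1) assms(3)] .
      with q(2) have "(trans M p a, x) \<in> nerode M" using E
        by (auto simp: nerode_def)
      then show "x \<in> nerode M `` {trans M p a}" by simp
    qed
  next
    have "(p, p) \<in> nerode M" using assms(2) by (simp add: nerode_def)
    then show "nerode M `` {trans M p a} \<subseteq> nerode M `` ((\<lambda>p. trans M p a) ` (nerode M `` {p}))"
      by auto
  qed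
  then show ?thesis by (simp add: quotient_def)
qed

lemma qrun:
  assumes "wf_dfa M" "p \<in> states M" "w \<in> lists (alph M)"
  shows "run (quotient M) (nerode M `` {p}) w = nerode M `` {run M p w}"
  using assms(2,3)
proof (induction w arbitrary: p)
  case Nil then show ?case by simp
next
  case (Cons a w)
  have "trans M p a \<in> states M" using Cons assms(1) unfolding wf_dfa_def by auto
  then show ?case using Cons qtrans[OF assms(1)] by simp
qed

lemma q_states[simp]: "states (quotient M) = states M // nerode M" by (simp add: quotient_def)
lemma q_alph[simp]: "alph (quotient M) = alph M" by (simp add: quotient_def)

lemma sink_closed:
  assumes "P \<in> Sink M" "p \<in> P" "w \<in> lists (alph M)"
  shows "run M p w \<in> P"
  using assms by (auto simp: Sink_def)

definition reach where "reach M p = {run M p w | w. w \<in> lists (alph M)}"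

lemma reach_sub: "wf_dfa M \<Longrightarrow> p \<in> states M \<Longrightarrow> reach M p \<subseteq> states M"
  using run_in[of M p] by (auto simp: reach_def)

lemma reach_trans: "q \<in> reach M p \<Longrightarrow> reach M q \<subseteq> reach M p"
proof
  fix x assume "x \<in> reach M q" and "q \<in> reach M p"
  then obtain u v where "u \<in> lists (alph M)" "q = run M p u" "v \<in> lists (alph M)" "x = run M q v"
    by (auto simp: reach_def)
  then show "x \<in> reach M p" unfolding reach_def
    by (intro CollectI exI[of _ "u @ v"]) (auto simp: run_append)
qed

lemma to_sink:
  assumes "wf_dfa M" "s \<in> states M"
  shows "\<exists>w\<in>lists (alph M). run M s w \<in> \<Union>(Sink M)"
proof -
  have "s \<in> reach M s" by (auto simp: reach_def intro: exI[of _ "[]"])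
  then obtain p where p: "p \<in> reach M s"
    and mn: "\<forall>q. q \<in> reach M s \<longrightarrow> card (reach M p) \<le> card (reach M q)"
    using ex_has_least_nat[of "\<lambda>p. p \<in> reach M s" s "\<lambda>p. card (reach M p)"] by blast
  have fin: "finite (states M)" using assms(1) by (simp add: wf_dfa_def)
  have pst: "p \<in> states M" using p reach_sub[OF assms] by auto
  have eq: "reach M q = reach M p" if "q \<in> reach M p" for q
  proof -
    have sub: "reach M q \<subseteq> reach M p" using reach_trans[OF that] .
    have "q \<in> reach M s" using that reach_trans[OF p] by auto
    then have "card (reach M p) \<le> card (reach M q)" using mn by blast
    moreover have "finite (reach M p)" using reach_sub[OF assms(1) pst] fin finite_subset by blast
    ultimately show ?thesis using sub card_subset_eq by (metis card_mono antisym)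
  qed
  have pp: "p \<in> reach M p" by (auto simp: reach_def intro: exI[of _ "[]"])
  have "reach M p \<in> Sink M"
    unfolding Sink_def
  proof (intro CollectI conjI ballI)
    show "reach M p \<noteq> {}" using pp by auto
    show "reach M p \<subseteq> states M" using reach_sub[OF assms(1) pst] .
  next
    fix x y assume x: "x \<in> reach M p" and y: "y \<in> reach M p"
    then have "y \<in> reach M x" using eq by auto
    then show "\<exists>w\<in>lists (alph M). run M x w = y" by (auto simp: reach_def)
  next
    fix x w assume x: "x \<in> reach M p" and "w \<in> lists (alph M)"
    then have "run M x w \<in> reach M x" by (auto simp: reach_def)
    then show "run M x w \<in> reach M p" using reach_trans[OF x] by auto
  qed
  moreover obtain u where "u \<in> lists (alph M)" "run M s u = p" using p by (auto simp: reach_def)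
  ultimately show ?thesis using pp by blast
qed

lemma sync_sink:
  assumes "wf_dfa M" "finite S" "S \<subseteq> states M"
  shows "\<exists>w\<in>lists (alph M). \<forall>p\<in>S. run M p w \<in> \<Union>(Sink M)"
  using assms(2,3)
proof (induction S rule: finite_induct)
  case empty then show ?case by (auto intro: exI[of _ "[]"])
next
  case (insert x S)
  then obtain w where w: "w \<in> lists (alph M)" "\<forall>p\<in>S. run M p w \<in> \<Union>(Sink M)" by auto
  have "run M x w \<in> states M" using run_in[OF assms(1) _ w(1)] insert by auto
  then obtain v where v: "v \<in> lists (alph M)" "run M (run M x w) v \<in> \<Union>(Sink M)"
    using to_sink[OF assms(1)] by blast
  have "\<forall>p\<in>insert x S. run M p (w @ v) \<in> \<Union>(Sink M)"
  proof
    fix p assume "p \<in> insert x S"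
    then show "run M p (w @ v) \<in> \<Union>(Sink M)"
    proof
      assume "p = x" then show ?thesis using v by (simp add: run_append)
    next
      assume "p \<in> S"
      then obtain P where "P \<in> Sink M" "run M p w \<in> P" using w by auto
      then have "run M (run M p w) v \<in> P" using sink_closed[OF _ _ v(1)] by blast
      then show ?thesis using \<open>P \<in> Sink M\<close> by (auto simp: run_append)
    qed
  qed
  moreover have "w @ v \<in> lists (alph M)" using w(1) v(1) by simp
  ultimately show ?case by blast
qed

theorem proposition7:
  fixes M :: "('q, 'a) dfa"
  assumes "wf_dfa M"
  shows "quasi_zero M \<longleftrightarrow> zero_automaton (quotient M)"
proof
  have E: "equiv (states M) (nerode M)" by (rule nerode_equiv)
  assume qz: "quasi_zero M"
  have sinkst: "\<Union>(Sink M) \<subseteq> states M"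
  proof
    fix x assume "x \<in> \<Union>(Sink M)"
    then obtain P where "P \<in> Sink M" "x \<in> P" by blast
    then show "x \<in> states M" unfolding Sink_def by blast
  qed
  have sameF: "Fut M p = Fut M q" if "p \<in> \<Union>(Sink M)" "q \<in> \<Union>(Sink M)" for p q
  proof -
    have closed: "run M x w \<in> \<Union>(Sink M)" if xs: "x \<in> \<Union>(Sink M)" and ws: "w \<in> lists (alph M)" for x w
    proof -
      obtain P where "P \<in> Sink M" "x \<in> P" using xs by blast
      then show ?thesis using sink_closed[OF _ _ ws] by blast
    qed
    have all: "Fut M x = (if \<Union>(Sink M) \<subseteq> final M then lists (alph M) else {})"
      if "x \<in> \<Union>(Sink M)" for x
    proof (cases "\<Union>(Sink M) \<subseteq> final M")
      case True
      have "\<forall>w\<in>lists (alph M). run M x w \<in> final M" using closed[OF that] True by blast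
      then show ?thesis using True unfolding Fut_def by auto
    next
      case False
      then have "\<Union>(Sink M) \<inter> final M = {}" using qz unfolding quasi_zero_def by simp
      then have "\<forall>w\<in>lists (alph M). run M x w \<notin> final M" using closed[OF that] by blast
      then show ?thesis using False unfolding Fut_def by auto
    qed
    show ?thesis using all[OF that(1)] all[OF that(2)] by simp
  qed
  have iin: "init M \<in> states M" using assms by (simp add: wf_dfa_def)
  obtain u where "u \<in> lists (alph M)" and z: "run M (init M) u \<in> \<Union>(Sink M)"
    using to_sink[OF assms iin] by blast
  define z0 where "z0 = run M (init M) u"
  have z0s: "z0 \<in> states M" using z z0_def sinkst by auto
  have SA: "\<forall>a\<in>alph (quotient M). trans (quotient M) (nerode M `` {z0}) a = nerode M `` {z0}"
  proof
    fix a assume a: "a \<in> alph (quotient M)"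
    then have a': "a \<in> alph M" by simp
    have "trans M z0 a = run M z0 [a]" by simp
    moreover obtain P where "P \<in> Sink M" "z0 \<in> P" using z z0_def by auto
    ultimately have "trans M z0 a \<in> \<Union>(Sink M)" using a' sink_closed[of P M z0 "[a]"] by auto
    then have "(z0, trans M z0 a) \<in> nerode M"
      using sameF[of z0 "trans M z0 a"] z z0_def sinkst by (auto simp: nerode_def)
    then show "trans (quotient M) (nerode M `` {z0}) a = nerode M `` {z0}"
      using qtrans[OF assms z0s a'] equiv_class_eq[OF E] by simp
  qed
  have SB: "nerode M `` {z0} \<in> states (quotient M)"
    using z0s by (simp add: quotientI)
  obtain w where w: "w \<in> lists (alph M)" "\<forall>p\<in>states M. run M p w \<in> \<Union>(Sink M)"
    using sync_sink[OF assms _ order_refl] assms unfolding wf_dfa_def by blast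
  have SC: "\<forall>C\<in>states (quotient M). run (quotient M) C w = nerode M `` {z0}"
  proof
    fix C assume "C \<in> states (quotient M)"
    then obtain p where p: "p \<in> states M" "C = nerode M `` {p}"
      by (auto elim: quotientE)
    have "run M p w \<in> \<Union>(Sink M)" using w p by auto
    then have "(run M p w, z0) \<in> nerode M"
      using sameF[of "run M p w" z0] z z0_def sinkst by (auto simp: nerode_def)
    then show "run (quotient M) C w = nerode M `` {z0}"
      using qrun[OF assms p(1) w(1)] p(2) equiv_class_eq[OF E] by simp
  qed
  have w': "w \<in> lists (alph (quotient M))" using w(1) by simp
  show "zero_automaton (quotient M)"
    unfolding zero_automaton_def
    using SA SB SC w' by (intro conjI bexI[of _ "nerode M `` {z0}"] bexI[of _ w] exI[of _ "nerode M `` {z0}"])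
next
  have E: "equiv (states M) (nerode M)" by (rule nerode_equiv)
  assume "zero_automaton (quotient M)"
  then obtain Z w r where Zs: "Z \<in> states (quotient M)"
    and Zf: "\<forall>a\<in>alph M. trans (quotient M) Z a = Z"
    and w: "w \<in> lists (alph M)" and r: "\<forall>C\<in>states (quotient M). run (quotient M) C w = r"
    unfolding zero_automaton_def q_alph by blast
  obtain z0 where z0: "z0 \<in> states M" "Z = nerode M `` {z0}"
    using Zs by (auto elim: quotientE)
  have Zrun: "run (quotient M) Z v = Z" if "v \<in> lists (alph M)" for v
    using that by (induction v) (auto simp: Zf)
  have rZ: "r = Z" using r Zs Zrun[OF w] by auto
  have toZ: "(z0, run M p w) \<in> nerode M" if "p \<in> states M" for p
  proof -
    have "nerode M `` {run M p w} = nerode M `` {z0}"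
      using qrun[OF assms that w] r rZ z0 that by (simp add: quotientI)
    then show ?thesis using eq_equiv_class_iff[OF E z0(1) run_in[OF assms that w]] by simp
  qed
  have closed: "(z0, run M q v) \<in> nerode M" if "(z0, q) \<in> nerode M" "v \<in> lists (alph M)" for q v
  proof -
    have qs: "q \<in> states M" using that by (auto simp: nerode_def)
    have "nerode M `` {q} = Z" using that z0 equiv_class_eq[OF E] by simp
    then have "nerode M `` {run M q v} = nerode M `` {z0}"
      using qrun[OF assms qs that(2)] Zrun[OF that(2)] z0 by simp
    then show ?thesis using eq_equiv_class_iff[OF E z0(1) run_in[OF assms qs that(2)]] by simp
  qed
  have allZ: "(z0, p) \<in> nerode M" if pS: "p \<in> \<Union>(Sink M)" for p
  proof -
    obtain P where P: "P \<in> Sink M" "p \<in> P" using pS by blast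
    have ps: "p \<in> states M" using P by (auto simp: Sink_def)
    have "run M p w \<in> P" using sink_closed[OF P w] .
    moreover have "\<forall>x\<in>P. \<forall>y\<in>P. \<exists>w\<in>lists (alph M). run M x w = y"
      using P(1) by (simp add: Sink_def)
    ultimately obtain v where v: "v \<in> lists (alph M)" "run M (run M p w) v = p"
      using P(2) by blast
    show ?thesis using closed[OF toZ[OF ps] v(1)] v(2) by simp
  qed
  have fz: "p \<in> final M \<longleftrightarrow> z0 \<in> final M" if "p \<in> \<Union>(Sink M)" for p
    using nerode_final[OF allZ[OF that]] by simp
  show "quasi_zero M"
    unfolding quasi_zero_def
  proof (cases "z0 \<in> final M")
    case True
    then have "\<Union>(Sink M) \<subseteq> final M" using fz by blast
    then show "\<Union>(Sink M) \<subseteq> final M \<or> \<Union>(Sink M) \<inter> final M = {}" by (rule disjI1)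
  next
    case False
    then have "\<Union>(Sink M) \<inter> final M = {}" using fz by blast
    then show "\<Union>(Sink M) \<subseteq> final M \<or> \<Union>(Sink M) \<inter> final M = {}" by (rule disjI2)
  qed
qed

end
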